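(* In the security-third model, for any attacker $m$, destination $d$, and AS $s$: if $s$ uses (in the stable routing state during $m$'s attack) a route to $d$ that avoids $m$ when the set of secure ASes is $S$, then $s$ uses a route to $d$ that avoids $m$ for every set of secure ASes $T\supset S$.
   Context: An AS graph is an undirected graph $G=(V,E)$ of ASes; each edge is labeled customer–provider or peer–peer. Routing is to a destination $d$; $d$ announces "$d$" to its neighbors; each other AS selects at most one route to $d$ among those announced by neighbors and announces it (prepended with itself) per the export policy: a route whose next hop is a customer is announced to all neighbors, otherwise only to customers. Route type is given by the relation of the next hop; length is the number of hops in the announced path. Insecure ASes rank routes by (LP) customer over peer over provider, then (SP) shorter over longer, then (TB) a fixed deterministic AS-specific tie-break. For a set of secure ASes, a route is secure iff all ASes on it are secure; in the security-third model each secure AS applies (SecP): prefer secure over insecure routes, between SP and TB. The attack: attacker $m\ne d$ (not a neighbor of $d$) announces the bogus path "$m,d$" via insecure BGP to all its neighbors; routes containing $m$ are insecure. A stable routing state is one in which no AS re-running its selection changes its route. *)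

theory Defs
  imports Main "HOL-Library.Product_Lexorder"
begin

(* AS graph: cust a b means "a is a customer of b" (b is a provider of a);
   peer a b means a and b are peers. *)
definition nbr :: "('a \<Rightarrow> 'a \<Rightarrow> bool) \<Rightarrow> ('a \<Rightarrow> 'a \<Rightarrow> bool) \<Rightarrow> 'a \<Rightarrow> 'a \<Rightarrow> bool" where
  "nbr cust peer a b \<longleftrightarrow> cust a b \<or> cust b a \<or> peer a b"

definition as_graph :: "'a set \<Rightarrow> ('a \<Rightarrow> 'a \<Rightarrow> bool) \<Rightarrow> ('a \<Rightarrow> 'a \<Rightarrow> bool) \<Rightarrow> bool" where
  "as_graph V cust peer \<longleftrightarrow> finite V
     \<and> (\<forall>a b. cust a b \<longrightarrow> a \<in> V \<and> b \<in> V \<and> a \<noteq> b \<and> \<not> cust b a \<and> \<not> peer a b)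
     \<and> (\<forall>a b. peer a b \<longrightarrow> a \<in> V \<and> b \<in> V \<and> a \<noteq> b \<and> peer b a)"

definition no_cp_cycles :: "('a \<Rightarrow> 'a \<Rightarrow> bool) \<Rightarrow> bool" where
  "no_cp_cycles cust \<longleftrightarrow> acyclic {(x, y). cust x y}"

(* Routes are lists of ASes: the route of AS a is  a # (path announced by its next hop),
   ending in d.  Export policy: neighbour n with route p announces p to a iff
   n = d, or n = m (the attacker announces its bogus path to everyone), or the next hop of n
   is a customer of n, or a is a customer of n. *)
definition exports :: "('a \<Rightarrow> 'a \<Rightarrow> bool) \<Rightarrow> 'a \<Rightarrow> 'a \<Rightarrow> 'a \<Rightarrow> 'a list \<Rightarrow> 'a \<Rightarrow> bool" where
  "exports cust d m n p a \<longleftrightarrow> n = d \<or> n = m \<or> cust a n \<or> (length p \<ge> 2 \<and> cust (p ! 1) n)"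

definition avail :: "('a \<Rightarrow> 'a \<Rightarrow> bool) \<Rightarrow> ('a \<Rightarrow> 'a \<Rightarrow> bool) \<Rightarrow> 'a \<Rightarrow> 'a
                      \<Rightarrow> ('a \<Rightarrow> 'a list option) \<Rightarrow> 'a \<Rightarrow> 'a list set" where
  "avail cust peer d m \<sigma> a = {a # p | n p. nbr cust peer a n \<and> \<sigma> n = Some p \<and>
       exports cust d m n p a \<and> a \<notin> set p}"

definition lp_rank :: "('a \<Rightarrow> 'a \<Rightarrow> bool) \<Rightarrow> ('a \<Rightarrow> 'a \<Rightarrow> bool) \<Rightarrow> 'a \<Rightarrow> 'a list \<Rightarrow> nat" where
  "lp_rank cust peer a r = (if cust (r ! 1) a then 0 else if peer (r ! 1) a then 1 else 2)"

definition secure_route :: "'a set \<Rightarrow> 'a \<Rightarrow> 'a list \<Rightarrow> bool" where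
  "secure_route S m r \<longleftrightarrow> set r \<subseteq> S \<and> m \<notin> set r"

(* security-third ranking key (smaller is better), compared lexicographically:
   LP, then SP (length), then SecP (only for secure ASes), then tie-break on next hop *)
definition rkey :: "('a \<Rightarrow> 'a \<Rightarrow> bool) \<Rightarrow> ('a \<Rightarrow> 'a \<Rightarrow> bool) \<Rightarrow> ('a \<Rightarrow> 'a \<Rightarrow> nat) \<Rightarrow> 'a set \<Rightarrow> 'a
                     \<Rightarrow> 'a \<Rightarrow> 'a list \<Rightarrow> nat \<times> nat \<times> nat \<times> nat" where
  "rkey cust peer tb S m a r =
     (lp_rank cust peer a r, length r,
      (if a \<in> S \<and> \<not> secure_route S m r then 1 else 0), tb a (r ! 1))"

definition stable :: "'a set \<Rightarrow> ('a \<Rightarrow> 'a \<Rightarrow> bool) \<Rightarrow> ('a \<Rightarrow> 'a \<Rightarrow> bool) \<Rightarrow> ('a \<Rightarrow> 'a \<Rightarrow> nat)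
                      \<Rightarrow> 'a set \<Rightarrow> 'a \<Rightarrow> 'a \<Rightarrow> ('a \<Rightarrow> 'a list option) \<Rightarrow> bool" where
  "stable V cust peer tb S d m \<sigma> \<longleftrightarrow>
     \<sigma> d = Some [d] \<and> \<sigma> m = Some [m, d] \<and> (\<forall>a. a \<notin> V \<longrightarrow> \<sigma> a = None) \<and>
     (\<forall>a \<in> V - {d, m}. (case \<sigma> a of
         None \<Rightarrow> avail cust peer d m \<sigma> a = {}
       | Some r \<Rightarrow> r \<in> avail cust peer d m \<sigma> a \<and>
            (\<forall>r' \<in> avail cust peer d m \<sigma> a. rkey cust peer tb S m a r \<le> rkey cust peer tb S m a r')))"

end

theory Submission
  imports Defs
begin

context
  fixes V :: "'a set" and cust peer :: "'a \<Rightarrow> 'a \<Rightarrow> bool" and d m :: 'a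
  assumes G: "as_graph V cust peer"
begin

lemma unfold_st:
  assumes st: "stable V cust peer tb S d m \<sigma>" and sx: "\<sigma> x = Some q" and x: "x \<notin> {d,m}"
  shows "\<exists>n p. q = x # p \<and> nbr cust peer x n \<and> \<sigma> n = Some p \<and> exports cust d m n p x \<and> x \<notin> set p
      \<and> x \<in> V \<and> q \<in> avail cust peer d m \<sigma> x \<and> (\<forall>r'\<in>avail cust peer d m \<sigma> x. rkey cust peer tb S m x q \<le> rkey cust peer tb S m x r')"
proof -
  have xV: "x \<in> V" using st sx unfolding stable_def by (metis option.distinct(1))
  hence "q \<in> avail cust peer d m \<sigma> x \<and> (\<forall>r'\<in>avail cust peer d m \<sigma> x. rkey cust peer tb S m x q \<le> rkey cust peer tb S m x r')"
    using st sx x unfolding stable_def by force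
  thus ?thesis using xV unfolding avail_def by blast
qed

lemma hd_st:
  assumes st: "stable V cust peer tb S d m \<sigma>" and sx: "\<sigma> x = Some q"
  shows "\<exists>q'. q = x # q'"
proof (cases "x \<in> {d,m}")
  case True thus ?thesis using st sx unfolding stable_def by auto
next
  case False thus ?thesis using unfold_st[OF st sx] by blast
qed

lemma tl_st:
  assumes st: "stable V cust peer tb S d m \<sigma>" and sx: "\<sigma> x = Some q" and l: "length q \<ge> 2"
  shows "\<sigma> (q!1) = Some (tl q)"
proof (cases "x \<in> {d,m}")
  case True thus ?thesis using st sx l unfolding stable_def by auto
next
  case False
  then obtain n p where "q = x # p" "\<sigma> n = Some p" using unfold_st[OF st sx] by blast
  moreover obtain p' where "p = n # p'" using hd_st[OF st \<open>\<sigma> n = Some p\<close>] by blast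
  ultimately show ?thesis by simp
qed

lemma drop_st:
  assumes st: "stable V cust peer tb S d m \<sigma>"
  shows "\<sigma> x = Some q \<Longrightarrow> i < length q \<Longrightarrow> \<sigma> (q!i) = Some (drop i q)"
proof (induction i arbitrary: x q)
  case 0 thus ?case using hd_st[OF st] by fastforce
next
  case (Suc i)
  have "\<sigma> (q!1) = Some (tl q)" using tl_st[OF st Suc.prems(1)] Suc.prems(2) by simp
  from Suc.IH[OF this] Suc.prems(2) have "\<sigma> (tl q ! i) = Some (drop i (tl q))" by simp
  thus ?case using Suc.prems(2) by (cases q) auto
qed

lemma cust_asym: "cust a b \<Longrightarrow> \<not> cust b a" using G unfolding as_graph_def by blast
lemma cust_peer: "cust a b \<Longrightarrow> \<not> peer b a \<and> \<not> peer a b" using G unfolding as_graph_def by blast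
lemma nbr_irr: "nbr cust peer a b \<Longrightarrow> a \<noteq> b" using G unfolding as_graph_def nbr_def by blast
lemma nbr_sym: "nbr cust peer a b \<Longrightarrow> nbr cust peer b a" using G unfolding as_graph_def nbr_def by blast

lemma custroute:
  assumes st: "stable V cust peer tb S d m \<sigma>"
  shows "\<sigma> x = Some q \<Longrightarrow> x \<notin> {d,m} \<Longrightarrow> cust (q!1) x \<Longrightarrow> b \<in> set q \<Longrightarrow> b \<notin> {d,m}
     \<Longrightarrow> \<exists>q'. \<sigma> b = Some q' \<and> cust (q'!1) b"
proof (induction q arbitrary: x)
  case Nil thus ?case by simp
next
  case (Cons y p)
  obtain n p0 where u: "y # p = x # p0" "\<sigma> n = Some p0" "exports cust d m n p0 x"
    using unfold_st[OF st Cons.prems(1,2)] by blast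
  obtain p1 where p0: "p0 = n # p1" using hd_st[OF st u(2)] by blast
  show ?case
  proof (cases "b = x")
    case True thus ?thesis using Cons.prems u by auto
  next
    case False
    hence bp: "b \<in> set p" using Cons.prems u by auto
    have pp: "p = p0" "y = x" using u by auto
    have cn: "cust n x" using Cons.prems(3) u p0 by simp
    have nd: "n \<noteq> d" using st u(2) bp pp Cons.prems(5) unfolding stable_def by auto
    have nm: "n \<noteq> m" using st u(2) bp pp Cons.prems(5) unfolding stable_def by auto
    have "cust (p0!1) n" using u(3) nd nm cust_asym[OF cn] unfolding exports_def by auto
    thus ?thesis using Cons.IH[of n] u(2) pp nd nm bp Cons.prems(5) by auto
  qed
qed

lemma rkey_le: "rkey cust peer tb S m x q \<le> rkey cust peer tb S m x q' \<Longrightarrow>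
   (lp_rank cust peer x q, length q) \<le> (lp_rank cust peer x q', length q')"
  unfolding rkey_def by auto

lemma step:
  assumes st1: "stable V cust peer tb1 S1 d m \<sigma>1" and st2: "stable V cust peer tb2 S2 d m \<sigma>2"
    and s: "s \<notin> {d,m}" and nb: "nbr cust peer s n" and s1: "\<sigma>1 n = Some p"
    and ex: "exports cust d m n p s" and sp: "s \<notin> set p" and s2: "\<sigma>2 n = Some p'"
    and lpe: "lp_rank cust peer n p' = lp_rank cust peer n p" and le: "length p' = length p"
  shows "(s # p' \<in> avail cust peer d m \<sigma>2 s \<and>
           (lp_rank cust peer s (s#p'), length (s#p')) = (lp_rank cust peer s (s#p), length (s#p)))
       \<or> (\<exists>q. \<sigma>2 s = Some q \<and> (lp_rank cust peer s q, length q) < (lp_rank cust peer s (s#p), length (s#p)))"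
proof -
  obtain p1 where p1: "p = n # p1" using hd_st[OF st1 s1] by blast
  obtain p2 where p2: "p' = n # p2" using hd_st[OF st2 s2] by blast
  have lps: "lp_rank cust peer s (s#p') = lp_rank cust peer s (s#p)" using p1 p2 unfolding lp_rank_def by simp
  have ex2: "exports cust d m n p' s"
  proof -
    { assume "\<not> (n = d \<or> n = m \<or> cust s n)"
      hence "length p \<ge> 2 \<and> cust (p!1) n" using ex unfolding exports_def by auto
      hence "length p' \<ge> 2 \<and> cust (p'!1) n" using lpe le unfolding lp_rank_def
        by (auto split: if_splits) }
    thus ?thesis unfolding exports_def by blast
  qed
  show ?thesis
  proof (cases "s \<in> set p'")
    case False
    hence "s # p' \<in> avail cust peer d m \<sigma>2 s" using nb s2 ex2 unfolding avail_def by blast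
    thus ?thesis using lps le by simp
  next
    case True
    have sn: "s \<noteq> n" using nbr_irr[OF nb] .
    then obtain i where i: "i < length p'" "p' ! i = s" "i > 0" using True p2
      by (metis gr0I in_set_conv_nth nth_Cons_0)
    have sq: "\<sigma>2 s = Some (drop i p')" using drop_st[OF st2 s2 i(1)] i(2) by simp
    have nd: "n \<noteq> d" "n \<noteq> m" using st2 s2 True s unfolding stable_def by auto
    have lpq: "lp_rank cust peer s (drop i p') \<le> lp_rank cust peer s (s#p)"
    proof (cases "lp_rank cust peer s (s#p) = 2")
      case True thus ?thesis unfolding lp_rank_def by auto
    next
      case False
      hence "cust n s \<or> peer n s" using p1 unfolding lp_rank_def by (auto split: if_splits)
      hence "\<not> cust s n" using cust_asym cust_peer G unfolding as_graph_def by blast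
      hence "cust (p!1) n" using ex nd unfolding exports_def by auto
      hence "cust (p'!1) n" using lpe unfolding lp_rank_def by (auto split: if_splits)
      then obtain q' where "\<sigma>2 s = Some q'" "cust (q'!1) s"
        using custroute[OF st2 s2 _ _ True s] nd by auto
      thus ?thesis using sq unfolding lp_rank_def by auto
    qed
    have "length (drop i p') < length (s#p)" using i le by simp
    thus ?thesis using sq lpq by auto
  qed
qed

lemma lp_le2: "lp_rank cust peer x q \<le> 2" unfolding lp_rank_def by auto

lemma inv_step:
  assumes st1: "stable V cust peer tb1 S1 d m \<sigma>1" and st2: "stable V cust peer tb2 S2 d m \<sigma>2"
    and IH: "\<forall>k'<k. (\<forall>s r. \<sigma>1 s = Some r \<longrightarrow> s \<notin> {d,m} \<longrightarrow> (lp_rank cust peer s r, length r) = k'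
                 \<longrightarrow> (\<exists>r'. \<sigma>2 s = Some r' \<and> (lp_rank cust peer s r', length r') \<le> k'))
             \<and> (\<forall>s r. \<sigma>2 s = Some r \<longrightarrow> s \<notin> {d,m} \<longrightarrow> (lp_rank cust peer s r, length r) = k'
                 \<longrightarrow> (\<exists>r'. \<sigma>1 s = Some r' \<and> (lp_rank cust peer s r', length r') \<le> k'))"
    and s1: "\<sigma>1 s = Some r" and s: "s \<notin> {d,m}" and k: "(lp_rank cust peer s r, length r) = k"
  shows "\<exists>r'. \<sigma>2 s = Some r' \<and> (lp_rank cust peer s r', length r') \<le> k"
proof -
  obtain n p where u: "r = s # p" "nbr cust peer s n" "\<sigma>1 n = Some p" "exports cust d m n p s" "s \<notin> set p"
    using unfold_st[OF st1 s1 s] by blast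
  obtain p1 where p1: "p = n # p1" using hd_st[OF st1 u(3)] by blast
  have "\<exists>p'. \<sigma>2 n = Some p' \<and> lp_rank cust peer n p' = lp_rank cust peer n p \<and> length p' = length p"
  proof (cases "n \<in> {d,m}")
    case True
    hence "\<sigma>2 n = \<sigma>1 n" using st1 st2 unfolding stable_def by auto
    thus ?thesis using u(3) by auto
  next
    case False
    have lpn: "lp_rank cust peer n p \<le> lp_rank cust peer s r"
    proof (cases "lp_rank cust peer s r = 2")
      case True thus ?thesis using lp_le2 by simp
    next
      case F2: False
      hence "cust n s \<or> peer n s" using u(1) p1 unfolding lp_rank_def by (auto split: if_splits)
      hence "\<not> cust s n" using cust_asym cust_peer G unfolding as_graph_def by blast
      hence "cust (p!1) n" using u(4) False unfolding exports_def by auto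
      thus ?thesis unfolding lp_rank_def by auto
    qed
    have kn: "(lp_rank cust peer n p, length p) < k" using lpn k u(1) by auto
    then obtain p' where p': "\<sigma>2 n = Some p'" "(lp_rank cust peer n p', length p') \<le> (lp_rank cust peer n p, length p)"
      using IH u(3) False by blast
    hence "(lp_rank cust peer n p', length p') < k" using kn by order
    then obtain p'' where "\<sigma>1 n = Some p''" "(lp_rank cust peer n p'', length p'') \<le> (lp_rank cust peer n p', length p')"
      using IH p'(1) False by blast
    hence "(lp_rank cust peer n p', length p') = (lp_rank cust peer n p, length p)" using p'(2) u(3) by auto
    thus ?thesis using p'(1) by auto
  qed
  then obtain p' where p': "\<sigma>2 n = Some p'" "lp_rank cust peer n p' = lp_rank cust peer n p" "length p' = length p"
    by blast
  from step[OF st1 st2 s u(2) u(3) u(4) u(5) p'] show ?thesis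
  proof
    assume a: "s # p' \<in> avail cust peer d m \<sigma>2 s \<and>
           (lp_rank cust peer s (s#p'), length (s#p')) = (lp_rank cust peer s (s#p), length (s#p))"
    have sV: "s \<in> V" using unfold_st[OF st1 s1 s] by blast
    show ?thesis
    proof (cases "\<sigma>2 s")
      case None thus ?thesis using st2 sV s a unfolding stable_def by force
    next
      case (Some r')
      hence "rkey cust peer tb2 S2 m s r' \<le> rkey cust peer tb2 S2 m s (s#p')"
        using unfold_st[OF st2 Some s] a by blast
      thus ?thesis using rkey_le Some a k u(1) by metis
    qed
  next
    assume "\<exists>q. \<sigma>2 s = Some q \<and> (lp_rank cust peer s q, length q) < (lp_rank cust peer s (s#p), length (s#p))"
    thus ?thesis using k u(1) by (metis order.strict_implies_order)
  qed
qed

lemma inv_both: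
  assumes st1: "stable V cust peer tb1 S1 d m \<sigma>1" and st2: "stable V cust peer tb2 S2 d m \<sigma>2"
  shows "(\<forall>s r. \<sigma>1 s = Some r \<longrightarrow> s \<notin> {d,m} \<longrightarrow> (lp_rank cust peer s r, length r) = k
                 \<longrightarrow> (\<exists>r'. \<sigma>2 s = Some r' \<and> (lp_rank cust peer s r', length r') \<le> k))
             \<and> (\<forall>s r. \<sigma>2 s = Some r \<longrightarrow> s \<notin> {d,m} \<longrightarrow> (lp_rank cust peer s r, length r) = k
                 \<longrightarrow> (\<exists>r'. \<sigma>1 s = Some r' \<and> (lp_rank cust peer s r', length r') \<le> k))"
proof (induction k rule: less_induct)
  case (less k)
  have IH2: "\<forall>k'<k. (\<forall>s r. \<sigma>2 s = Some r \<longrightarrow> s \<notin> {d,m} \<longrightarrow> (lp_rank cust peer s r, length r) = k'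
                 \<longrightarrow> (\<exists>r'. \<sigma>1 s = Some r' \<and> (lp_rank cust peer s r', length r') \<le> k'))
             \<and> (\<forall>s r. \<sigma>1 s = Some r \<longrightarrow> s \<notin> {d,m} \<longrightarrow> (lp_rank cust peer s r, length r) = k'
                 \<longrightarrow> (\<exists>r'. \<sigma>2 s = Some r' \<and> (lp_rank cust peer s r', length r') \<le> k'))"
    using less by blast
  have IH1: "\<forall>k'<k. (\<forall>s r. \<sigma>1 s = Some r \<longrightarrow> s \<notin> {d,m} \<longrightarrow> (lp_rank cust peer s r, length r) = k'
                 \<longrightarrow> (\<exists>r'. \<sigma>2 s = Some r' \<and> (lp_rank cust peer s r', length r') \<le> k'))
             \<and> (\<forall>s r. \<sigma>2 s = Some r \<longrightarrow> s \<notin> {d,m} \<longrightarrow> (lp_rank cust peer s r, length r) = k'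
                 \<longrightarrow> (\<exists>r'. \<sigma>1 s = Some r' \<and> (lp_rank cust peer s r', length r') \<le> k'))"
    using less by blast
  show ?case
    using inv_step[OF st1 st2 IH1] inv_step[OF st2 st1 IH2]
    by blast
qed

lemma inv_eq:
  assumes st1: "stable V cust peer tb1 S1 d m \<sigma>1" and st2: "stable V cust peer tb2 S2 d m \<sigma>2"
    and s1: "\<sigma>1 s = Some r" and s: "s \<notin> {d,m}"
  shows "\<exists>r'. \<sigma>2 s = Some r' \<and> (lp_rank cust peer s r', length r') = (lp_rank cust peer s r, length r)"
proof -
  obtain r' where r': "\<sigma>2 s = Some r'" "(lp_rank cust peer s r', length r') \<le> (lp_rank cust peer s r, length r)"
    using inv_both[OF st1 st2] s1 s by blast
  obtain r'' where "\<sigma>1 s = Some r''" "(lp_rank cust peer s r'', length r'') \<le> (lp_rank cust peer s r', length r')"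
    using inv_both[OF st1 st2] r'(1) s by blast
  thus ?thesis using r' s1 by auto
qed

lemma main_ind:
  assumes stS: "stable V cust peer tb S d m \<sigma>S" and stT: "stable V cust peer tb T d m \<sigma>T"
    and ST: "S \<subseteq> T" and inj: "\<forall>a. inj_on (tb a) {n. nbr cust peer a n}"
  shows "\<sigma>S s = Some r \<Longrightarrow> (m \<notin> set r \<longrightarrow> (\<exists>r'. \<sigma>T s = Some r' \<and> m \<notin> set r'))
          \<and> (secure_route S m r \<longrightarrow> (\<exists>r'. \<sigma>T s = Some r' \<and> secure_route T m r'))"
proof (induction "length r" arbitrary: s r rule: less_induct)
  case less
  show ?case
  proof (cases "s \<in> {d,m}")
    case True
    thus ?thesis using stS stT less.prems ST unfolding stable_def secure_route_def by auto
  next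
    case s: False
    obtain n p where u: "r = s # p" "nbr cust peer s n" "\<sigma>S n = Some p" "exports cust d m n p s" "s \<notin> set p"
      "\<forall>r'\<in>avail cust peer d m \<sigma>S s. rkey cust peer tb S m s r \<le> rkey cust peer tb S m s r'"
      using unfold_st[OF stS less.prems s] by blast
    obtain r' where r': "\<sigma>T s = Some r'" "(lp_rank cust peer s r', length r') = (lp_rank cust peer s r, length r)"
      using inv_eq[OF stS stT less.prems s] by blast
    obtain n' p' where u': "r' = s # p'" "nbr cust peer s n'" "\<sigma>T n' = Some p'" "exports cust d m n' p' s" "s \<notin> set p'"
      "\<forall>q\<in>avail cust peer d m \<sigma>T s. rkey cust peer tb T m s r' \<le> rkey cust peer tb T m s q"
      using unfold_st[OF stT r'(1) s] by blast
    obtain p1 where p1: "p = n # p1" using hd_st[OF stS u(3)] by blast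
    obtain p1' where p1': "p' = n' # p1'" using hd_st[OF stT u'(3)] by blast
    have "\<exists>p''. \<sigma>T n = Some p'' \<and> lp_rank cust peer n p'' = lp_rank cust peer n p \<and> length p'' = length p"
    proof (cases "n \<in> {d,m}")
      case True
      hence "\<sigma>T n = \<sigma>S n" using stS stT unfolding stable_def by auto
      thus ?thesis using u(3) by auto
    next
      case False thus ?thesis using inv_eq[OF stS stT u(3)] by auto
    qed
    then obtain p'' where p'': "\<sigma>T n = Some p''" "lp_rank cust peer n p'' = lp_rank cust peer n p" "length p'' = length p"
      by blast
    have "\<exists>q''. \<sigma>S n' = Some q'' \<and> lp_rank cust peer n' q'' = lp_rank cust peer n' p' \<and> length q'' = length p'"
    proof (cases "n' \<in> {d,m}")
      case True
      hence "\<sigma>T n' = \<sigma>S n'" using stS stT unfolding stable_def by auto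
      hence "\<sigma>S n' = Some p'" using u'(3) by simp
      thus ?thesis by blast
    next
      case False thus ?thesis using inv_eq[OF stT stS u'(3)] by auto
    qed
    then obtain q'' where q'': "\<sigma>S n' = Some q''" "lp_rank cust peer n' q'' = lp_rank cust peer n' p'" "length q'' = length p'"
      by blast
    have avT: "s # p'' \<in> avail cust peer d m \<sigma>T s"
      and rkT: "(lp_rank cust peer s (s#p''), length (s#p'')) = (lp_rank cust peer s r, length r)"
      using step[OF stS stT s u(2) u(3) u(4) u(5) p''] r' u(1) by auto
    have avS: "s # q'' \<in> avail cust peer d m \<sigma>S s"
      and rkS: "(lp_rank cust peer s (s#q''), length (s#q'')) = (lp_rank cust peer s r', length r')"
      using step[OF stT stS s u'(2) u'(3) u'(4) u'(5) q''] less.prems u'(1) r'(2) by auto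
    obtain p2'' where p2'': "p'' = n # p2''" using hd_st[OF stT p''(1)] by blast
    obtain q2'' where q2'': "q'' = n' # q2''" using hd_st[OF stS q''(1)] by blast
    define sbT where "sbT q = (if s \<in> T \<and> \<not> secure_route T m q then 1 else (0::nat))" for q
    define sbS where "sbS q = (if s \<in> S \<and> \<not> secure_route S m q then 1 else (0::nat))" for q
    have sbT1: "sbT q \<le> 1" for q by (simp add: sbT_def)
    have sbS1: "sbS q \<le> 1" for q by (simp add: sbS_def)
    have K1: "rkey cust peer tb T m s r' \<le> rkey cust peer tb T m s (s#p'')" using u'(6) avT by blast
    have K2: "rkey cust peer tb S m s r \<le> rkey cust peer tb S m s (s#q'')" using u(6) avS by blast
    have e1: "lp_rank cust peer s r' = lp_rank cust peer s (s#p'')" "length r' = length (s#p'')"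
      using rkT r'(2) by auto
    have e2: "lp_rank cust peer s r = lp_rank cust peer s (s#q'')" "length r = length (s#q'')"
      using rkS r'(2) by auto
    have F1: "(sbT r', tb s n') \<le> (sbT (s#p''), tb s n)"
      using K1 e1 u'(1) p1' p2'' unfolding rkey_def sbT_def by simp
    have F2: "(sbS r, tb s n) \<le> (sbS (s#q''), tb s n')"
      using K2 e2 u(1) p1 q2'' unfolding rkey_def sbS_def by simp
    have lenp: "length p < length r" using u(1) by simp
    note IHn = less.hyps[OF lenp u(3)]
    have B: "secure_route S m r \<longrightarrow> (\<exists>r'. \<sigma>T s = Some r' \<and> secure_route T m r')"
    proof
      assume sec: "secure_route S m r"
      hence "secure_route S m p" using u(1) unfolding secure_route_def by auto
      hence "secure_route T m p''" using IHn p''(1) by auto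
      moreover have "s \<in> S" "s \<noteq> m" using sec u(1) unfolding secure_route_def by auto
      ultimately have "secure_route T m (s#p'')" using ST unfolding secure_route_def by auto
      hence "sbT (s#p'') = 0" unfolding sbT_def by simp
      hence "sbT r' = 0" using F1 by auto
      hence "secure_route T m r'" using \<open>s \<in> S\<close> ST unfolding sbT_def by (auto split: if_splits)
      thus "\<exists>r'. \<sigma>T s = Some r' \<and> secure_route T m r'" using r'(1) by blast
    qed
    have A: "m \<notin> set r \<longrightarrow> (\<exists>r'. \<sigma>T s = Some r' \<and> m \<notin> set r')"
    proof
      assume mr: "m \<notin> set r"
      show "\<exists>r'. \<sigma>T s = Some r' \<and> m \<notin> set r'"
      proof (cases "s \<in> T \<and> secure_route T m r'")
        case True thus ?thesis using r'(1) unfolding secure_route_def by auto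
      next
        case ns: False
        have t1: "tb s n' \<le> tb s n"
        proof (cases "s \<in> T")
          case True
          hence "sbT r' = 1" using ns unfolding sbT_def by auto
          thus ?thesis using F1 sbT1[of "s#p''"] by auto
        next
          case False
          hence "sbT q = 0" for q by (simp add: sbT_def)
          thus ?thesis using F1 by auto
        qed
        have t2: "tb s n \<le> tb s n'"
        proof (cases "s \<in> S")
          case True
          have "sbS r = 1"
          proof (rule ccontr)
            assume "sbS r \<noteq> 1"
            hence "secure_route S m r" using True unfolding sbS_def by (auto split: if_splits)
            hence "secure_route T m r'" using B r'(1) by auto
            thus False using ns True ST by auto
          qed
          thus ?thesis using F2 sbS1[of "s#q''"] by auto
        next
          case False
          hence "sbS q = 0" for q by (simp add: sbS_def)
          thus ?thesis using F2 by auto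
        qed
        have "n = n'" using inj t1 t2 u(2) u'(2) unfolding inj_on_def by (metis antisym mem_Collect_eq)
        hence "r' = s # p''" using u'(1) u'(3) p''(1) by simp
        moreover have "m \<notin> set p''" using IHn mr u(1) p''(1) by auto
        moreover have "s \<noteq> m" using s by auto
        ultimately show ?thesis using r'(1) by auto
      qed
    qed
    show ?thesis using A B by blast
  qed
qed

end


theorem theorem4:
  fixes V S T :: "'a set" and cust peer :: "'a \<Rightarrow> 'a \<Rightarrow> bool" and tb :: "'a \<Rightarrow> 'a \<Rightarrow> nat"
    and d m s :: 'a and \<sigma>S \<sigma>T :: "'a \<Rightarrow> 'a list option" and r :: "'a list"
  assumes "as_graph V cust peer"
    and "no_cp_cycles cust"
    and "\<forall>a. inj_on (tb a) {n. nbr cust peer a n}"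
    and "d \<in> V" and "m \<in> V" and "m \<noteq> d" and "\<not> nbr cust peer m d"
    and "S \<subset> T"
    and "stable V cust peer tb S d m \<sigma>S"
    and "stable V cust peer tb T d m \<sigma>T"
    and "\<sigma>S s = Some r" and "m \<notin> set r"
  shows "\<exists>r'. \<sigma>T s = Some r' \<and> m \<notin> set r'"
  using main_ind[OF assms(1) assms(9) assms(10) _ assms(3) assms(11)] assms(8) assms(12) by blast

end
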